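(* Let a quantum circuit with input-node set $I$ be given, together with an input state vector $|\psi\rangle\in Q^{\otimes I}$. Then there is a unique function assigning to each stage $Z$ of the circuit a vector $C(|\psi\rangle,Z)\in Q^{\otimes\mathrm{Exit}(Z)}$ such that: (1) $C(|\psi\rangle,\emptyset)=|\psi\rangle$ (note $\mathrm{Exit}(\emptyset)=I$); (2) whenever $G$ is a gate ready at a stage $Z$, $$C(|\psi\rangle,Z+G)=(I_R\otimes U_G)\,C(|\psi\rangle,Z),$$ where $R=\mathrm{Exit}(Z)\setminus\pi(G)$, $I_R$ is the identity operator on $Q^{\otimes R}$, and $Q^{\otimes\mathrm{Exit}(Z)}$ and $Q^{\otimes\mathrm{Exit}(Z+G)}$ are identified with $Q^{\otimes R}\otimes Q^{\otimes\iota_G}$ and $Q^{\otimes R}\otimes Q^{\otimes o_G}$ respectively as described in the context.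
   Context: $Q=\mathbb{C}^2$; for a finite set $S$, $Q^{\otimes S}$ is the tensor product of $S$-indexed copies of $Q$; a bijection $S\to S'$ induces a canonical isomorphism $Q^{\otimes S}\cong Q^{\otimes S'}$, and for disjoint $S,T$ one has canonically $Q^{\otimes(S\sqcup T)}\cong Q^{\otimes S}\otimes Q^{\otimes T}$. A quantum circuit consists of a finite set $I$ of input nodes, a finite set $O$ of output nodes, a finite set of gates, an assignment to each gate $G$ of a triple $(\iota_G,o_G,U_G)$ with $\iota_G,o_G$ finite sets and $U_G:Q^{\otimes\iota_G}\to Q^{\otimes o_G}$ unitary, and a bijective provider function $\pi$ from consumers to producers. Producers are the input nodes and output ports $(G,\mathrm{out},l)$, $l\in o_G$; consumers are output nodes and input ports $(G,\mathrm{in},l)$, $l\in\iota_G$ (all pairwise distinct). The relation $G\prec H$ on gates (iff $\pi$ maps some input port of $H$ to an output port of $G$) is required to be acyclic. For a gate $H$, $\pi(H)=\{\pi(H,\mathrm{in},l):l\in\iota_H\}$. A stage is a set $Z$ of gates such that $H\in Z$ and $H'\prec H$ imply $H'\in Z$. $\mathrm{Exit}(Z)$ is the set of producers that are input nodes or output ports of gates in $Z$ and that lie in no $\pi(H)$ with $H\in Z$. A gate $G\notin Z$ is ready at $Z$ if every $H\prec G$ lies in $Z$; then $Z+G:=Z\cup\{G\}$. If $G$ is ready at $Z$ and $R=\mathrm{Exit}(Z)\setminus\pi(G)$, then $\mathrm{Exit}(Z)=R\sqcup\pi(G)$ and $\mathrm{Exit}(Z+G)=R\sqcup\{(G,\mathrm{out},m):m\in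 o_G\}$; using the bijections $l\mapsto\pi(G,\mathrm{in},l)$ ($l\in\iota_G$) and $m\mapsto(G,\mathrm{out},m)$ ($m\in o_G$), one identifies $Q^{\otimes\mathrm{Exit}(Z)}$ with $Q^{\otimes R}\otimes Q^{\otimes\iota_G}$ and $Q^{\otimes\mathrm{Exit}(Z+G)}$ with $Q^{\otimes R}\otimes Q^{\otimes o_G}$. *)

theory Defs
  imports Complex_Main
begin

datatype ('n,'g,'l) producer = InNode 'n | OutPort 'g 'l
datatype ('n,'g,'l) consumer = OutNode 'n | InPort 'g 'l

text \<open>Computational basis of Q^{\<otimes>S}: assignments S \<rightarrow> {0,1} (False outside S).
  A vector of Q^{\<otimes>S} is a complex function on these basis states (zero elsewhere).\<close>

definition qbasis :: "'a set \<Rightarrow> ('a \<Rightarrow> bool) set" where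
  "qbasis S = {b. \<forall>x. x \<notin> S \<longrightarrow> \<not> b x}"

definition qvec :: "'a set \<Rightarrow> (('a \<Rightarrow> bool) \<Rightarrow> complex) set" where
  "qvec S = {v. \<forall>b. b \<notin> qbasis S \<longrightarrow> v b = 0}"

text \<open>A linear map Q^{\<otimes>A} \<rightarrow> Q^{\<otimes>B} is given by its matrix M c b
  (c output basis state, b input basis state); unitarity means M* M = I and M M* = I.\<close>

definition unitary_mat :: "'a set \<Rightarrow> 'a set \<Rightarrow> (('a \<Rightarrow> bool) \<Rightarrow> ('a \<Rightarrow> bool) \<Rightarrow> complex) \<Rightarrow> bool" where
  "unitary_mat A B M \<longleftrightarrow>
     (\<forall>b\<in>qbasis A. \<forall>b'\<in>qbasis A.
        (\<Sum>c\<in>qbasis B. cnj (M c b) * M c b') = (if b = b' then 1 else 0)) \<and>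
     (\<forall>c\<in>qbasis B. \<forall>c'\<in>qbasis B.
        (\<Sum>b\<in>qbasis A. M c b * cnj (M c' b)) = (if c = c' then 1 else 0))"

record ('n,'g,'l) circuit =
  inputs  :: "'n set"
  outputs :: "'n set"
  gates   :: "'g set"
  iota    :: "'g \<Rightarrow> 'l set"
  outp    :: "'g \<Rightarrow> 'l set"
  gateU   :: "'g \<Rightarrow> ('l \<Rightarrow> bool) \<Rightarrow> ('l \<Rightarrow> bool) \<Rightarrow> complex"
  prov    :: "('n,'g,'l) consumer \<Rightarrow> ('n,'g,'l) producer"

definition producers :: "('n,'g,'l,'z) circuit_scheme \<Rightarrow> ('n,'g,'l) producer set" where
  "producers C = InNode ` inputs C \<union> {OutPort G l | G l. G \<in> gates C \<and> l \<in> outp C G}"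

definition consumers :: "('n,'g,'l,'z) circuit_scheme \<Rightarrow> ('n,'g,'l) consumer set" where
  "consumers C = OutNode ` outputs C \<union> {InPort G l | G l. G \<in> gates C \<and> l \<in> iota C G}"

definition gprec :: "('n,'g,'l,'z) circuit_scheme \<Rightarrow> 'g \<Rightarrow> 'g \<Rightarrow> bool" where
  "gprec C G H \<longleftrightarrow> G \<in> gates C \<and> H \<in> gates C \<and>
     (\<exists>l\<in>iota C H. \<exists>m. prov C (InPort H l) = OutPort G m)"

definition circuit :: "('n,'g,'l,'z) circuit_scheme \<Rightarrow> bool" where
  "circuit C \<longleftrightarrow>
     finite (inputs C) \<and> finite (outputs C) \<and> finite (gates C) \<and>
     (\<forall>G\<in>gates C. finite (iota C G) \<and> finite (outp C G) \<and>
        unitary_mat (iota C G) (outp C G) (gateU C G)) \<and>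
     bij_betw (prov C) (consumers C) (producers C) \<and>
     acyclic {(G, H). gprec C G H}"

definition provset :: "('n,'g,'l,'z) circuit_scheme \<Rightarrow> 'g \<Rightarrow> ('n,'g,'l) producer set" where
  "provset C H = {prov C (InPort H l) | l. l \<in> iota C H}"

definition stage :: "('n,'g,'l,'z) circuit_scheme \<Rightarrow> 'g set \<Rightarrow> bool" where
  "stage C Z \<longleftrightarrow> Z \<subseteq> gates C \<and> (\<forall>H H'. H \<in> Z \<longrightarrow> gprec C H' H \<longrightarrow> H' \<in> Z)"

definition Exit :: "('n,'g,'l,'z) circuit_scheme \<Rightarrow> 'g set \<Rightarrow> ('n,'g,'l) producer set" where
  "Exit C Z = {p. (p \<in> InNode ` inputs C \<or> (\<exists>G\<in>Z. \<exists>m\<in>outp C G. p = OutPort G m)) \<and>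
                  (\<forall>H\<in>Z. p \<notin> provset C H)}"

definition ready :: "('n,'g,'l,'z) circuit_scheme \<Rightarrow> 'g set \<Rightarrow> 'g \<Rightarrow> bool" where
  "ready C Z G \<longleftrightarrow> G \<in> gates C \<and> G \<notin> Z \<and> (\<forall>H. gprec C H G \<longrightarrow> H \<in> Z)"

text \<open>Canonical identification of Q^{\<otimes>I} with Q^{\<otimes>Exit(\<emptyset>)} via n \<mapsto> InNode n.\<close>
definition embed_input :: "('n,'g,'l,'z) circuit_scheme \<Rightarrow> (('n \<Rightarrow> bool) \<Rightarrow> complex)
    \<Rightarrow> (('n,'g,'l) producer \<Rightarrow> bool) \<Rightarrow> complex" where
  "embed_input C \<psi> = (\<lambda>c. if c \<in> qbasis (InNode ` inputs C) then \<psi> (\<lambda>n. c (InNode n)) else 0)"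

text \<open>Given a basis state c of Exit(Z+G) and a basis state b of Q^{\<otimes>\<iota>_G}, the basis state
  of Exit(Z) = R \<sqcup> \<pi>(G) agreeing with c on R and with b on \<pi>(G) (via l \<mapsto> \<pi>(G,in,l)).\<close>
definition glue_in :: "('n,'g,'l,'z) circuit_scheme \<Rightarrow> 'g set \<Rightarrow> 'g
    \<Rightarrow> (('n,'g,'l) producer \<Rightarrow> bool) \<Rightarrow> ('l \<Rightarrow> bool) \<Rightarrow> ('n,'g,'l) producer \<Rightarrow> bool" where
  "glue_in C Z G c b = (\<lambda>p.
     if p \<in> Exit C Z - provset C G then c p
     else if (\<exists>l\<in>iota C G. p = prov C (InPort G l))
       then b (SOME l. l \<in> iota C G \<and> p = prov C (InPort G l))
     else False)"

definition out_part :: "('n,'g,'l,'z) circuit_scheme \<Rightarrow> 'g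
    \<Rightarrow> (('n,'g,'l) producer \<Rightarrow> bool) \<Rightarrow> 'l \<Rightarrow> bool" where
  "out_part C G c = (\<lambda>m. if m \<in> outp C G then c (OutPort G m) else False)"

text \<open>(I_R \<otimes> U_G) under the identifications of the context.\<close>
definition apply_gate :: "('n,'g,'l,'z) circuit_scheme \<Rightarrow> 'g set \<Rightarrow> 'g
    \<Rightarrow> ((('n,'g,'l) producer \<Rightarrow> bool) \<Rightarrow> complex)
    \<Rightarrow> ((('n,'g,'l) producer \<Rightarrow> bool) \<Rightarrow> complex)" where
  "apply_gate C Z G v = (\<lambda>c.
     if c \<in> qbasis (Exit C (insert G Z)) then
       (\<Sum>b\<in>qbasis (iota C G). gateU C G (out_part C G c) b * v (glue_in C Z G c b))
     else 0)"

end

theory Submission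
  imports Defs
begin

definition wires :: "('n,'g,'l,'z) circuit_scheme \<Rightarrow> 'g set \<Rightarrow> ('n,'g,'l) producer set" where
  "wires C Z = InNode ` inputs C \<union> {OutPort H m | H m. H \<in> Z \<and> m \<in> outp C H}"

definition inp :: "('n,'g,'l,'z) circuit_scheme \<Rightarrow> 'g \<Rightarrow> (('n,'g,'l) producer \<Rightarrow> bool) \<Rightarrow> 'l \<Rightarrow> bool" where
  "inp C H a = (\<lambda>l. if l \<in> iota C H then a (prov C (InPort H l)) else False)"

definition wfn :: "('n,'g,'l,'z) circuit_scheme \<Rightarrow> (('n \<Rightarrow> bool) \<Rightarrow> complex) \<Rightarrow> 'g set
   \<Rightarrow> (('n,'g,'l) producer \<Rightarrow> bool) \<Rightarrow> complex" where
  "wfn C \<psi> Z a = \<psi> (\<lambda>n. if n \<in> inputs C then a (InNode n) else False) * (\<Prod>H\<in>Z. gateU C H (out_part C H a) (inp C H a))"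

definition StD :: "('n,'g,'l,'z) circuit_scheme \<Rightarrow> (('n \<Rightarrow> bool) \<Rightarrow> complex) \<Rightarrow> 'g set
   \<Rightarrow> (('n,'g,'l) producer \<Rightarrow> bool) \<Rightarrow> complex" where
  "StD C \<psi> Z = (\<lambda>c. if c \<in> qbasis (Exit C Z) then
      (\<Sum>a\<in>{a\<in>qbasis (wires C Z). \<forall>p\<in>Exit C Z. a p = c p}. wfn C \<psi> Z a) else 0)"

lemma finite_qbasis: "finite S \<Longrightarrow> finite (qbasis S)"
proof -
  assume f: "finite S"
  have "qbasis S \<subseteq> (\<lambda>T x. x \<in> T) ` Pow S"
  proof
    fix b assume b: "b \<in> qbasis S"
    have "b = (\<lambda>x. x \<in> {x\<in>S. b x})" using b by (auto simp: qbasis_def fun_eq_iff)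
    then show "b \<in> (\<lambda>T x. x \<in> T) ` Pow S" by blast
  qed
  then show ?thesis using f by (meson finite_Pow_iff finite_imageI finite_subset)
qed

lemma circ_bij: "circuit C \<Longrightarrow> bij_betw (prov C) (consumers C) (producers C)"
  unfolding circuit_def by (elim conjE) assumption

lemma circ_acyc: "circuit C \<Longrightarrow> acyclic {(G, H). gprec C G H}"
  unfolding circuit_def by (elim conjE) assumption

lemma prov_in:
  assumes "circuit C" "G \<in> gates C" "l \<in> iota C G"
  shows "prov C (InPort G l) \<in> producers C"
proof -
  have "InPort G l \<in> consumers C" using assms by (auto simp: consumers_def)
  then show ?thesis using circ_bij[OF assms(1)] unfolding bij_betw_def by blast
qed

lemma prov_inj:
  assumes "circuit C" "G \<in> gates C" "l \<in> iota C G" "H \<in> gates C" "l' \<in> iota C H"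
    "prov C (InPort G l) = prov C (InPort H l')"
  shows "H = G \<and> l' = l"
proof -
  have "InPort G l \<in> consumers C" "InPort H l' \<in> consumers C" using assms by (auto simp: consumers_def)
  moreover have "inj_on (prov C) (consumers C)" using circ_bij[OF assms(1)] unfolding bij_betw_def by blast
  ultimately show ?thesis using assms(6) by (auto dest: inj_onD)
qed

lemma prov_src:
  assumes "circuit C" "G \<in> gates C" "l \<in> iota C G"
  shows "prov C (InPort G l) \<in> InNode ` inputs C \<or>
     (\<exists>G' m. prov C (InPort G l) = OutPort G' m \<and> gprec C G' G \<and> m \<in> outp C G')"
  using prov_in[OF assms] assms by (auto simp: producers_def gprec_def)

lemma circ_gate:
  assumes "circuit C" "G \<in> gates C"
  shows "finite (iota C G)" "finite (outp C G)"
proof -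
  have "\<forall>G\<in>gates C. finite (iota C G) \<and> finite (outp C G) \<and>
        unitary_mat (iota C G) (outp C G) (gateU C G)"
    using assms(1) unfolding circuit_def by (elim conjE) assumption
  then show "finite (iota C G)" "finite (outp C G)" using assms(2) by auto
qed

lemma circ_fin: "circuit C \<Longrightarrow> finite (inputs C)" "circuit C \<Longrightarrow> finite (gates C)"
  unfolding circuit_def by (elim conjE; assumption)+

lemma ExitI: "p \<in> InNode ` inputs C \<or> (\<exists>G\<in>Z. \<exists>m\<in>outp C G. p = OutPort G m) \<Longrightarrow>
   \<forall>H\<in>Z. p \<notin> provset C H \<Longrightarrow> p \<in> Exit C Z"
  unfolding Exit_def by blast

lemma ExitD1: "p \<in> Exit C Z \<Longrightarrow> p \<in> InNode ` inputs C \<or> (\<exists>G\<in>Z. \<exists>m\<in>outp C G. p = OutPort G m)"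
  unfolding Exit_def by blast

lemma ExitD2: "p \<in> Exit C Z \<Longrightarrow> \<forall>H\<in>Z. p \<notin> provset C H"
  unfolding Exit_def by blast

lemma no_self: "circuit C \<Longrightarrow> \<not> gprec C G G"
proof
  assume c: "circuit C" and g: "gprec C G G"
  then have "(G, G) \<in> {(G, H). gprec C G H}\<^sup>+" by auto
  then show False using circ_acyc[OF c] unfolding acyclic_def by blast
qed

definition Os :: "('n,'g,'l,'z) circuit_scheme \<Rightarrow> 'g \<Rightarrow> ('n,'g,'l) producer set" where
  "Os C G = {OutPort G m | m. m \<in> outp C G}"

context
  fixes C :: "('n,'g,'l) circuit" and Z :: "'g set" and G :: 'g
  assumes circ: "circuit C" and st: "stage C Z" and rd: "ready C Z G"
begin

lemma GgZ: "G \<in> gates C" "G \<notin> Z" "Z \<subseteq> gates C"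
  using rd st by (auto simp: ready_def stage_def)

lemma L1: "provset C G \<subseteq> Exit C Z"
proof
  fix p assume "p \<in> provset C G"
  then obtain l where l: "l \<in> iota C G" "p = prov C (InPort G l)" unfolding provset_def by blast
  note src0 = prov_src[OF circ GgZ(1) l(1)]
  have src: "p \<in> InNode ` inputs C \<or> (\<exists>G'\<in>Z. \<exists>m\<in>outp C G'. p = OutPort G' m)"
  proof (cases "prov C (InPort G l) \<in> InNode ` inputs C")
    case True then show ?thesis using l(2) by simp
  next
    case False
    then obtain G' m where "prov C (InPort G l) = OutPort G' m" "gprec C G' G" "m \<in> outp C G'"
      using src0 by blast
    moreover have "G' \<in> Z" using rd \<open>gprec C G' G\<close> unfolding ready_def by blast
    ultimately show ?thesis using l(2) by blast
  qed
  have "\<forall>H\<in>Z. p \<notin> provset C H"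
  proof (intro ballI notI)
    fix H assume H: "H \<in> Z" "p \<in> provset C H"
    then obtain l' where l': "l' \<in> iota C H" "p = prov C (InPort H l')" unfolding provset_def by blast
    have Hg: "H \<in> gates C" using subsetD[OF GgZ(3) H(1)] .
    have eq: "prov C (InPort G l) = prov C (InPort H l')" using l(2) l'(2) by simp
    have "H = G" using prov_inj[OF circ GgZ(1) l(1) Hg l'(1) eq] by simp
    then show False using H GgZ by simp
  qed
  then show "p \<in> Exit C Z" using src by (intro ExitI)
qed

lemma L2: "Exit C (insert G Z) = (Exit C Z - provset C G) \<union> Os C G"
proof (intro equalityI subsetI)
  fix p assume p: "p \<in> Exit C (insert G Z)"
  have src: "p \<in> InNode ` inputs C \<or> (\<exists>H\<in>insert G Z. \<exists>m\<in>outp C H. p = OutPort H m)"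
    using ExitD1[OF p] .
  have nP: "\<forall>H\<in>insert G Z. p \<notin> provset C H" using ExitD2[OF p] .
  show "p \<in> (Exit C Z - provset C G) \<union> Os C G"
  proof (cases "p \<in> Os C G")
    case True then show ?thesis by (rule UnI2)
  next
    case False
    have src': "p \<in> InNode ` inputs C \<or> (\<exists>H\<in>Z. \<exists>m\<in>outp C H. p = OutPort H m)"
    proof (cases "p \<in> InNode ` inputs C")
      case True then show ?thesis by (rule disjI1)
    next
      case nI: False
      then obtain H m where Hm: "H \<in> insert G Z" "m \<in> outp C H" "p = OutPort H m"
        using src by blast
      have "H \<noteq> G"
      proof
        assume "H = G"
        then have "p \<in> Os C G" using Hm unfolding Os_def by blast
        then show False using False by contradiction
      qed
      then have "H \<in> Z" using Hm(1) by simp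
      then show ?thesis using Hm by blast
    qed
    have n1: "\<forall>H\<in>Z. p \<notin> provset C H" using nP by simp
    have n2: "p \<notin> provset C G" using nP by simp
    have "p \<in> Exit C Z" by (rule ExitI[OF src' n1])
    then show ?thesis using n2 by blast
  qed
next
  fix p assume p: "p \<in> (Exit C Z - provset C G) \<union> Os C G"
  show "p \<in> Exit C (insert G Z)"
  proof (cases "p \<in> Os C G")
    case False then have pE: "p \<in> Exit C Z" and pP: "p \<notin> provset C G" using p by blast+
    have src: "p \<in> InNode ` inputs C \<or> (\<exists>H\<in>Z. \<exists>m\<in>outp C H. p = OutPort H m)"
      using ExitD1[OF pE] .
    have "p \<in> InNode ` inputs C \<or> (\<exists>H\<in>insert G Z. \<exists>m\<in>outp C H. p = OutPort H m)"
      using src by blast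
    moreover have "\<forall>H\<in>insert G Z. p \<notin> provset C H" using ExitD2[OF pE] pP by simp
    ultimately show ?thesis by (rule ExitI)
  next
    case True
    then obtain m where m: "m \<in> outp C G" "p = OutPort G m" unfolding Os_def by blast
    have "\<forall>H\<in>insert G Z. p \<notin> provset C H"
    proof (intro ballI notI)
      fix H assume H: "H \<in> insert G Z" "p \<in> provset C H"
      then obtain l where l: "l \<in> iota C H" "p = prov C (InPort H l)" unfolding provset_def by blast
      have Hg: "H \<in> gates C" using H GgZ by auto
      have gp: "gprec C G H" unfolding gprec_def using Hg l m GgZ(1) by metis
      show False
      proof (cases "H = G")
        case True then show False using gp no_self[OF circ] by simp
      next
        case False then have "H \<in> Z" using H by simp
        then have "G \<in> Z" using gp st unfolding stage_def by blast
        then show False using GgZ by simp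
      qed
    qed
    moreover have "p \<in> InNode ` inputs C \<or> (\<exists>H\<in>insert G Z. \<exists>m\<in>outp C H. p = OutPort H m)"
      using m by blast
    ultimately show ?thesis by (intro ExitI)
  qed
qed

lemma L3: "stage C (insert G Z)"
  using st rd by (auto simp: stage_def ready_def)

lemma L4: "Os C G \<inter> wires C Z = {}"
  using GgZ by (auto simp: Os_def wires_def)

lemma wiresG: "wires C (insert G Z) = wires C Z \<union> Os C G"
  by (auto simp: Os_def wires_def)

end

lemma Exit_sub: "Exit C Z \<subseteq> wires C Z"
  by (auto simp: Exit_def wires_def)

lemma L5:
  assumes circ: "circuit C" and st: "stage C Z" and H: "H \<in> Z" and l: "l \<in> iota C H"
  shows "prov C (InPort H l) \<in> wires C Z"
proof -
  have "H \<in> gates C" using st H by (auto simp: stage_def)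
  from prov_src[OF circ this l] show ?thesis
    using st H by (auto simp: wires_def stage_def)
qed

lemma wfn_cong:
  assumes circ: "circuit C" and st: "stage C Z" and ag: "\<forall>p\<in>wires C Z. a p = a2 p"
  shows "wfn C \<psi> Z a = wfn C \<psi> Z a2"
proof -
  have "(\<lambda>n. if n \<in> inputs C then a (InNode n) else False) = (\<lambda>n. if n \<in> inputs C then a2 (InNode n) else False)"
    using ag by (auto simp: wires_def fun_eq_iff)
  moreover have "(\<Prod>H\<in>Z. gateU C H (out_part C H a) (inp C H a)) = (\<Prod>H\<in>Z. gateU C H (out_part C H a2) (inp C H a2))"
  proof (rule prod.cong[OF refl])
    fix H assume H: "H \<in> Z"
    have "out_part C H a = out_part C H a2" using ag H by (auto simp: out_part_def wires_def fun_eq_iff)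
    moreover have "inp C H a = inp C H a2" using ag L5[OF circ st H] by (auto simp: inp_def fun_eq_iff)
    ultimately show "gateU C H (out_part C H a) (inp C H a) = gateU C H (out_part C H a2) (inp C H a2)" by simp
  qed
  ultimately show ?thesis by (simp add: wfn_def)
qed


lemma glue_qbasis:
  fixes C :: "('n,'g,'l) circuit"
  assumes circ: "circuit C" and st: "stage C Z" and rd: "ready C Z G"
    and c: "c \<in> qbasis (Exit C (insert G Z))"
  shows "glue_in C Z G c b \<in> qbasis (Exit C Z)"
proof -
  have "\<And>p. p \<notin> Exit C Z \<Longrightarrow> glue_in C Z G c b p = False"
  proof -
    fix p assume p: "p \<notin> Exit C Z"
    have "\<not> (\<exists>l\<in>iota C G. p = prov C (InPort G l))"
      using p L1[OF circ st rd] by (auto simp: provset_def)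
    then show "glue_in C Z G c b p = False" using p by (simp add: glue_in_def)
  qed
  then show ?thesis by (auto simp: qbasis_def)
qed

lemma glue_set:
  fixes C :: "('n,'g,'l) circuit"
  assumes circ: "circuit C" and st: "stage C Z" and rd: "ready C Z G"
    and b: "b \<in> qbasis (iota C G)"
  shows "{a\<in>qbasis (wires C Z). \<forall>p\<in>Exit C Z. a p = glue_in C Z G c b p}
       = {a\<in>{a\<in>qbasis (wires C Z). \<forall>p\<in>Exit C Z - provset C G. a p = c p}. inp C G a = b}"
proof -
  have G: "G \<in> gates C" using rd by (simp add: ready_def)
  have some: "\<And>l. l \<in> iota C G \<Longrightarrow> (SOME l'. l' \<in> iota C G \<and> prov C (InPort G l) = prov C (InPort G l')) = l"
  proof -
    fix l assume l: "l \<in> iota C G"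
    show "(SOME l'. l' \<in> iota C G \<and> prov C (InPort G l) = prov C (InPort G l')) = l"
    proof (rule some_equality)
      show "l \<in> iota C G \<and> prov C (InPort G l) = prov C (InPort G l)" using l by simp
    next
      fix l' assume "l' \<in> iota C G \<and> prov C (InPort G l) = prov C (InPort G l')"
      then show "l' = l" using prov_inj[OF circ G l G] by blast
    qed
  qed
  have gl: "\<And>l. l \<in> iota C G \<Longrightarrow> glue_in C Z G c b (prov C (InPort G l)) = b l"
  proof -
    fix l assume l: "l \<in> iota C G"
    have "prov C (InPort G l) \<in> provset C G" using l by (auto simp: provset_def)
    then have notin: "prov C (InPort G l) \<notin> Exit C Z - provset C G" by blast
    have ex: "\<exists>l'\<in>iota C G. prov C (InPort G l) = prov C (InPort G l')" using l by blast
    show "glue_in C Z G c b (prov C (InPort G l)) = b l"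
      unfolding glue_in_def by (simp only: if_not_P[OF notin] if_P[OF ex] some[OF l])
  qed
  have gl2: "\<And>p. p \<in> Exit C Z - provset C G \<Longrightarrow> glue_in C Z G c b p = c p"
    by (simp add: glue_in_def)
  show ?thesis
  proof (intro equalityI subsetI)
    fix a assume a: "a \<in> {a\<in>qbasis (wires C Z). \<forall>p\<in>Exit C Z. a p = glue_in C Z G c b p}"
    have "inp C G a = b"
    proof
      fix l show "inp C G a l = b l"
      proof (cases "l \<in> iota C G")
        case True
        have "prov C (InPort G l) \<in> Exit C Z" using L1[OF circ st rd] True by (auto simp: provset_def)
        then show ?thesis using a gl[OF True] True by (auto simp: inp_def)
      next
        case False then show ?thesis using b by (auto simp: inp_def qbasis_def)
      qed
    qed
    then show "a \<in> {a\<in>{a\<in>qbasis (wires C Z). \<forall>p\<in>Exit C Z - provset C G. a p = c p}. inp C G a = b}"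
      using a gl2 by auto
  next
    fix a assume a: "a \<in> {a\<in>{a\<in>qbasis (wires C Z). \<forall>p\<in>Exit C Z - provset C G. a p = c p}. inp C G a = b}"
    have "\<forall>p\<in>Exit C Z. a p = glue_in C Z G c b p"
    proof
      fix p assume p: "p \<in> Exit C Z"
      show "a p = glue_in C Z G c b p"
      proof (cases "p \<in> provset C G")
        case True
        then obtain l where l: "l \<in> iota C G" "p = prov C (InPort G l)" by (auto simp: provset_def)
        have "inp C G a l = b l" using a by simp
        then show ?thesis using gl[OF l(1)] l by (simp add: inp_def)
      next
        case False then show ?thesis using a p gl2 by auto
      qed
    qed
    then show "a \<in> {a\<in>qbasis (wires C Z). \<forall>p\<in>Exit C Z. a p = glue_in C Z G c b p}" using a by auto
  qed
qed


lemma finite_wires: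
  assumes circ: "circuit C" and sub: "Z \<subseteq> gates C"
  shows "finite (wires C Z)"
proof -
  have fZ: "finite Z" using circ_fin[OF circ] sub by (meson finite_subset)
  have "wires C Z = InNode ` inputs C \<union> (\<Union>H\<in>Z. OutPort H ` outp C H)"
    by (auto simp: wires_def)
  moreover have "finite (\<Union>H\<in>Z. OutPort H ` outp C H)"
    using fZ circ_gate[OF circ] sub by (intro finite_UN_I) auto
  ultimately show ?thesis using circ_fin[OF circ] by simp
qed

lemma wfn_insert:
  assumes "finite Z" "G \<notin> Z"
  shows "wfn C \<psi> (insert G Z) x = gateU C G (out_part C G x) (inp C G x) * wfn C \<psi> Z x"
  using assms by (simp add: wfn_def mult_ac)

lemma StD_step:
  fixes C :: "('n,'g,'l) circuit"
  assumes circ: "circuit C" and st: "stage C Z" and rd: "ready C Z G"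
  shows "StD C \<psi> (insert G Z) = apply_gate C Z G (StD C \<psi> Z)"
proof (rule ext)
  fix c
  show "StD C \<psi> (insert G Z) c = apply_gate C Z G (StD C \<psi> Z) c"
  proof (cases "c \<in> qbasis (Exit C (insert G Z))")
    case False then show ?thesis by (simp add: StD_def apply_gate_def)
  next
    case True
    note cq = True
    have GgZ: "G \<in> gates C" "G \<notin> Z" "Z \<subseteq> gates C" using GgZ[OF circ st rd] by auto
    have fZ: "finite Z" using circ_fin[OF circ] GgZ(3) by (meson finite_subset)
    define E where "E = Exit C Z"
    define P where "P = provset C G"
    define W where "W = wires C Z"
    define OG where "OG = Os C G"
    define T where "T = {a\<in>qbasis W. \<forall>p\<in>E - P. a p = c p}"
    define T' where "T' = {a\<in>qbasis (wires C (insert G Z)). \<forall>p\<in>Exit C (insert G Z). a p = c p}"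
    define U where "U = (\<lambda>b. gateU C G (out_part C G c) b)"
    define ex where "ex = (\<lambda>a p. if p \<in> OG then c p else a p)"
    define res where "res = (\<lambda>a p. if p \<in> W then a p else False)"
    have PE: "P \<subseteq> E" unfolding P_def E_def by (rule L1[OF circ st rd])
    have EW: "E \<subseteq> W" unfolding E_def W_def by (rule Exit_sub)
    have OW: "OG \<inter> W = {}" unfolding OG_def W_def by (rule L4[OF circ st rd])
    have E': "Exit C (insert G Z) = (E - P) \<union> OG" unfolding E_def P_def OG_def by (rule L2[OF circ st rd])
    have W': "wires C (insert G Z) = W \<union> OG" unfolding W_def OG_def by (rule wiresG[OF circ st rd])
    have fW: "finite W" unfolding W_def using finite_wires[OF circ GgZ(3)] .
    have fT: "finite T" unfolding T_def using finite_qbasis[OF fW] by simp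
    have fI: "finite (iota C G)" using circ_gate[OF circ GgZ(1)] by blast
    have "apply_gate C Z G (StD C \<psi> Z) c
        = (\<Sum>b\<in>qbasis (iota C G). U b * StD C \<psi> Z (glue_in C Z G c b))"
      unfolding apply_gate_def U_def if_P[OF cq] ..
    also have "\<dots> = (\<Sum>b\<in>qbasis (iota C G). \<Sum>a\<in>{a. a \<in> T \<and> inp C G a = b}. U (inp C G a) * wfn C \<psi> Z a)"
    proof (rule sum.cong[OF refl])
      fix b assume b: "b \<in> qbasis (iota C G)"
      have "StD C \<psi> Z (glue_in C Z G c b)
          = (\<Sum>a\<in>{a\<in>qbasis (wires C Z). \<forall>p\<in>Exit C Z. a p = glue_in C Z G c b p}. wfn C \<psi> Z a)"
        using glue_qbasis[OF circ st rd cq] by (simp add: StD_def)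
      also have "\<dots> = (\<Sum>a\<in>{a. a \<in> T \<and> inp C G a = b}. wfn C \<psi> Z a)"
        using glue_set[OF circ st rd b, of c] unfolding T_def W_def E_def P_def by simp
      finally have "U b * StD C \<psi> Z (glue_in C Z G c b) = (\<Sum>a\<in>{a. a \<in> T \<and> inp C G a = b}. U b * wfn C \<psi> Z a)"
        by (simp add: sum_distrib_left)
      also have "\<dots> = (\<Sum>a\<in>{a. a \<in> T \<and> inp C G a = b}. U (inp C G a) * wfn C \<psi> Z a)"
        by (rule sum.cong) auto
      finally show "U b * StD C \<psi> Z (glue_in C Z G c b) = (\<Sum>a\<in>{a. a \<in> T \<and> inp C G a = b}. U (inp C G a) * wfn C \<psi> Z a)" .
    qed
    also have "\<dots> = (\<Sum>a\<in>T. U (inp C G a) * wfn C \<psi> Z a)"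
    proof (rule sum.group[OF fT finite_qbasis[OF fI]])
      show "inp C G ` T \<subseteq> qbasis (iota C G)" by (auto simp: inp_def qbasis_def)
    qed
    also have "\<dots> = (\<Sum>a\<in>T. wfn C \<psi> (insert G Z) (ex a))"
    proof (rule sum.cong[OF refl])
      fix a assume a: "a \<in> T"
      have agree: "\<forall>p\<in>wires C Z. ex a p = a p" using OW unfolding ex_def W_def by auto
      have o: "out_part C G (ex a) = out_part C G c"
        by (auto simp: out_part_def ex_def OG_def Os_def fun_eq_iff)
      have i: "inp C G (ex a) = inp C G a"
      proof -
        have "\<And>l. l \<in> iota C G \<Longrightarrow> prov C (InPort G l) \<notin> OG"
        proof -
          fix l assume "l \<in> iota C G"
          then have "prov C (InPort G l) \<in> P" by (auto simp: P_def provset_def)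
          then show "prov C (InPort G l) \<notin> OG" using PE EW OW by blast
        qed
        then show ?thesis by (auto simp: inp_def ex_def fun_eq_iff)
      qed
      show "U (inp C G a) * wfn C \<psi> Z a = wfn C \<psi> (insert G Z) (ex a)"
        unfolding wfn_insert[OF fZ GgZ(2)] o i wfn_cong[OF circ st agree] U_def ..
    qed
    also have "\<dots> = (\<Sum>a'\<in>T'. wfn C \<psi> (insert G Z) a')"
    proof (rule sum.reindex_bij_betw)
      show "bij_betw ex T T'"
      proof (rule bij_betw_byWitness[where f' = res])
        show "\<forall>a\<in>T. res (ex a) = a"
        proof
          fix a assume "a \<in> T"
          then have "a \<in> qbasis W" by (simp add: T_def)
          then show "res (ex a) = a" using OW by (auto simp: res_def ex_def qbasis_def fun_eq_iff)
        qed
        show "\<forall>a'\<in>T'. ex (res a') = a'"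
        proof
          fix a' assume a': "a' \<in> T'"
          then have q: "a' \<in> qbasis (W \<union> OG)" and ag: "\<forall>p\<in>(E - P) \<union> OG. a' p = c p"
            by (auto simp: T'_def W' E')
          show "ex (res a') = a'"
          proof
            fix p show "ex (res a') p = a' p"
              using q ag by (cases "p \<in> OG"; cases "p \<in> W") (auto simp: res_def ex_def qbasis_def)
          qed
        qed
        show "ex ` T \<subseteq> T'"
        proof
          fix x assume "x \<in> ex ` T"
          then obtain a where a: "a \<in> T" "x = ex a" by blast
          then have q: "a \<in> qbasis W" and ag: "\<forall>p\<in>E - P. a p = c p" by (auto simp: T_def)
          have "x \<in> qbasis (W \<union> OG)" using q a(2) by (auto simp: qbasis_def ex_def)
          moreover have "\<forall>p\<in>(E - P) \<union> OG. x p = c p" using ag a(2) EW OW by (auto simp: ex_def)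
          ultimately show "x \<in> T'" by (simp add: T'_def W' E')
        qed
        show "res ` T' \<subseteq> T"
        proof
          fix x assume "x \<in> res ` T'"
          then obtain a' where a': "a' \<in> T'" "x = res a'" by blast
          then have ag: "\<forall>p\<in>(E - P) \<union> OG. a' p = c p" by (auto simp: T'_def E')
          have "x \<in> qbasis W" using a'(2) by (auto simp: qbasis_def res_def)
          moreover have "\<forall>p\<in>E - P. x p = c p" using ag a'(2) EW by (auto simp: res_def)
          ultimately show "x \<in> T" by (simp add: T_def)
        qed
      qed
    qed
    also have "\<dots> = StD C \<psi> (insert G Z) c"
      using cq by (simp add: StD_def T'_def)
    finally show ?thesis by simp
  qed
qed


lemma StD_empty:
  fixes C :: "('n,'g,'l) circuit"
  shows "StD C \<psi> {} = embed_input C \<psi>"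
proof (rule ext)
  fix c
  have E0: "Exit C {} = InNode ` inputs C" unfolding Exit_def by blast
  have W0: "wires C {} = InNode ` inputs C" unfolding wires_def by blast
  show "StD C \<psi> {} c = embed_input C \<psi> c"
  proof (cases "c \<in> qbasis (InNode ` inputs C)")
    case False then show ?thesis unfolding StD_def embed_input_def E0 by simp
  next
    case True
    have S: "{a\<in>qbasis (wires C {}). \<forall>p\<in>Exit C {}. a p = c p} = {c}"
    proof (intro equalityI subsetI)
      fix a assume a: "a \<in> {a\<in>qbasis (wires C {}). \<forall>p\<in>Exit C {}. a p = c p}"
      show "a \<in> {c}"
      proof -
        have "a = c"
        proof
          fix p show "a p = c p"
            using a True unfolding E0 W0 qbasis_def by (cases "p \<in> InNode ` inputs C") auto
        qed
        then show ?thesis by simp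
      qed
    next
      fix a assume "a \<in> {c}"
      then show "a \<in> {a\<in>qbasis (wires C {}). \<forall>p\<in>Exit C {}. a p = c p}"
        using True unfolding E0 W0 by simp
    qed
    have "(\<lambda>n. if n \<in> inputs C then c (InNode n) else False) = (\<lambda>n. c (InNode n))"
    proof
      fix n show "(if n \<in> inputs C then c (InNode n) else False) = c (InNode n)"
        using True unfolding qbasis_def by auto
    qed
    then have "wfn C \<psi> {} c = \<psi> (\<lambda>n. c (InNode n))" unfolding wfn_def by simp
    then show ?thesis using True unfolding StD_def embed_input_def S E0[symmetric] by simp
  qed
qed

lemma max_elem:
  fixes C :: "('n,'g,'l) circuit"
  assumes circ: "circuit C" and sub: "Z \<subseteq> gates C" and ne: "Z \<noteq> {}"
  shows "\<exists>G\<in>Z. \<forall>H. gprec C G H \<longrightarrow> H \<notin> Z"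
proof -
  let ?r = "{(G, H). gprec C G H}"
  have "?r \<subseteq> gates C \<times> gates C" unfolding gprec_def by auto
  then have "finite ?r" using circ_fin[OF circ] by (meson finite_SigmaI finite_subset)
  then have "wf (?r\<inverse>)" using circ_acyc[OF circ] by (rule finite_acyclic_wf_converse)
  moreover obtain x where "x \<in> Z" using ne by blast
  ultimately obtain z where "z \<in> Z" "\<forall>y. (y, z) \<in> ?r\<inverse> \<longrightarrow> y \<notin> Z"
    unfolding wf_eq_minimal by blast
  then show ?thesis by auto
qed

lemma uniq:
  fixes C :: "('n,'g,'l) circuit"
  assumes circ: "circuit C"
    and h1: "\<forall>Z G. stage C Z \<longrightarrow> ready C Z G \<longrightarrow> S1 (insert G Z) = apply_gate C Z G (S1 Z)"
    and h2: "\<forall>Z G. stage C Z \<longrightarrow> ready C Z G \<longrightarrow> S2 (insert G Z) = apply_gate C Z G (S2 Z)"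
    and h0: "S1 {} = S2 {}"
  shows "stage C Z \<Longrightarrow> S1 Z = S2 Z"
proof (induction "card Z" arbitrary: Z rule: less_induct)
  case less
  show ?case
  proof (cases "Z = {}")
    case True then show ?thesis using h0 by simp
  next
    case False
    have sub: "Z \<subseteq> gates C" using less.prems unfolding stage_def by blast
    have fZ: "finite Z" using circ_fin[OF circ] sub by (meson finite_subset)
    obtain G where G: "G \<in> Z" "\<forall>H. gprec C G H \<longrightarrow> H \<notin> Z" using max_elem[OF circ sub False] by blast
    define Z0 where "Z0 = Z - {G}"
    have st0: "stage C Z0"
      using less.prems G unfolding stage_def Z0_def by blast
    have rd: "ready C Z0 G"
      using less.prems G no_self[OF circ, of G] unfolding ready_def stage_def Z0_def by blast
    have ZZ: "insert G Z0 = Z" using G(1) unfolding Z0_def by blast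
    have "card Z0 < card Z" using fZ G(1) unfolding Z0_def by (metis card_Diff1_less)
    then have "S1 Z0 = S2 Z0" using less.hyps st0 by blast
    then show ?thesis using h1 h2 st0 rd ZZ by metis
  qed
qed

theorem mainTheorem5:
  fixes C :: "('n,'g,'l) circuit"
    and \<psi> :: "('n \<Rightarrow> bool) \<Rightarrow> complex"
  assumes "circuit C"
    and "\<psi> \<in> qvec (inputs C)"
  shows "\<exists>St :: 'g set \<Rightarrow> (('n,'g,'l) producer \<Rightarrow> bool) \<Rightarrow> complex.
           ((\<forall>Z. stage C Z \<longrightarrow> St Z \<in> qvec (Exit C Z)) \<and>
            St {} = embed_input C \<psi> \<and>
            (\<forall>Z G. stage C Z \<longrightarrow> ready C Z G \<longrightarrow>
                St (insert G Z) = apply_gate C Z G (St Z))) \<and>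
           (\<forall>St' :: 'g set \<Rightarrow> (('n,'g,'l) producer \<Rightarrow> bool) \<Rightarrow> complex.
              ((\<forall>Z. stage C Z \<longrightarrow> St' Z \<in> qvec (Exit C Z)) \<and>
               St' {} = embed_input C \<psi> \<and>
               (\<forall>Z G. stage C Z \<longrightarrow> ready C Z G \<longrightarrow>
                  St' (insert G Z) = apply_gate C Z G (St' Z)))
              \<longrightarrow> (\<forall>Z. stage C Z \<longrightarrow> St' Z = St Z))"
proof (intro exI conjI allI impI)
  let ?S = "StD C \<psi>"
  show "\<And>Z. stage C Z \<Longrightarrow> ?S Z \<in> qvec (Exit C Z)"
    unfolding qvec_def StD_def by simp
  show "?S {} = embed_input C \<psi>" by (rule StD_empty)
  show "\<And>Z G. stage C Z \<Longrightarrow> ready C Z G \<Longrightarrow> ?S (insert G Z) = apply_gate C Z G (?S Z)"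
    by (rule StD_step[OF assms(1)])
  fix St' Z
  assume h: "(\<forall>Z. stage C Z \<longrightarrow> St' Z \<in> qvec (Exit C Z)) \<and>
               St' {} = embed_input C \<psi> \<and>
               (\<forall>Z G. stage C Z \<longrightarrow> ready C Z G \<longrightarrow>
                  St' (insert G Z) = apply_gate C Z G (St' Z))"
    and st: "stage C Z"
  have h1: "\<forall>Z G. stage C Z \<longrightarrow> ready C Z G \<longrightarrow> ?S (insert G Z) = apply_gate C Z G (?S Z)"
    using StD_step[OF assms(1)] by blast
  show "St' Z = ?S Z"
    by (rule uniq[OF assms(1) _ h1 _ st]) (use h StD_empty[of C \<psi>] in auto)
qed

end
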